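(* Let $a_1,\dots,a_k$ be positive integers with $\gcd(a_1,\dots,a_k)=1$, let $\mathit{NR}$ be the finite set of positive integers that are not representable, let $a$ be one of the $a_i$, let $\mathcal{N}$ be the set of positive integers $n$ such that $n$ is representable and $n-a$ is not, and let $\mathcal{N}_0=\mathcal{N}\cup\{0\}$. Then for all complex $z\neq 0$ with $e^{az}\neq1$, \[ \sum_{n\in\mathit{NR}}e^{nz}=\frac{1}{e^{az}-1}\sum_{n\in\mathcal{N}_0}e^{nz}-\frac{1}{e^z-1}, \] and, writing $S_m=\sum_{n\in\mathit{NR}}n^m$, for every integer $m\ge1$, \[ mS_{m-1}=a^{m-1}\sum_{n\in\mathcal{N}_0}B_m(n/a)-B_m . \]
   Context: An integer $n$ is representable if $n=\sum_i a_ix_i$ with all $x_i$ nonnegative integers. $B_m(x)$ denotes the Bernoulli polynomials, defined by $\frac{te^{tx}}{e^t-1}=\sum_{m\ge0}B_m(x)\frac{t^m}{m!}$, and $B_m=B_m(0)$ are the Bernoulli numbers. *)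

theory Defs
  imports "HOL-Analysis.Analysis" "HOL-Computational_Algebra.Formal_Power_Series"
begin

definition bernpoly :: "nat \<Rightarrow> real \<Rightarrow> real" where
  "bernpoly m x = fact m * fps_nth (fps_X * fps_exp x / (fps_exp 1 - 1)) m"

definition bernoulli :: "nat \<Rightarrow> real" where
  "bernoulli m = bernpoly m 0"

definition representable :: "(nat \<Rightarrow> nat) \<Rightarrow> nat \<Rightarrow> int \<Rightarrow> bool" where
  "representable a k n \<longleftrightarrow> (\<exists>x :: nat \<Rightarrow> nat. n = (\<Sum>i=1..k. int (a i * x i)))"

end

theory Submission imports Defs begin

no_notation vec_nth (infixl \<open>$\<close> 90)
notation fps_nth (infixl \<open>$\<close> 75)


definition fscale :: "real \<Rightarrow> real fps \<Rightarrow> real fps" where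
  "fscale c F = Abs_fps (\<lambda>n. c ^ n * F $ n)"

lemma fscale_nth [simp]: "fscale c F $ n = c ^ n * F $ n"
  by (simp add: fscale_def)

lemma fscale_mult: "fscale c (F * G) = fscale c F * fscale c G"
proof (rule fps_ext)
  fix n
  have "fscale c (F * G) $ n = (\<Sum>i=0..n. c^n * (F$i * G$(n-i)))"
    by (simp add: fps_mult_nth sum_distrib_left)
  also have "\<dots> = (\<Sum>i=0..n. (c^i * F$i) * (c^(n-i) * G$(n-i)))"
    by (rule sum.cong) (auto simp: power_add[symmetric])
  finally show "fscale c (F * G) $ n = (fscale c F * fscale c G) $ n"
    by (simp add: fps_mult_nth)
qed

lemma fscale_exp: "fscale c (fps_exp x) = fps_exp (c * x)"
  by (rule fps_ext) (simp add: power_mult_distrib)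

lemma fscale_X: "fscale c fps_X = fps_const c * fps_X"
  by (rule fps_ext) (simp add: fps_X_def)

lemma fscale_diff: "fscale c (F - G) = fscale c F - fscale c G"
  by (rule fps_ext) (simp add: algebra_simps)

lemma fscale_one: "fscale c 1 = 1"
  by (rule fps_ext) simp

definition UU :: "real fps" where "UU = fps_X / (fps_exp 1 - 1)"

lemma D_eq: "(fps_exp 1 - 1 :: real fps) = fps_X * fps_shift 1 (fps_exp 1 - 1)"
  by (rule fps_ext) auto

lemma D_dvd: "(fps_exp 1 - 1 :: real fps) dvd fps_X"
proof -
  have u: "is_unit (fps_shift 1 (fps_exp 1 - 1 :: real fps))" by simp
  show ?thesis by (subst D_eq) (simp add: mult_unit_dvd_iff u)
qed

lemma D_U: "UU * (fps_exp 1 - 1) = fps_X"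
  unfolding UU_def using D_dvd by simp

lemma bernpoly_U: "bernpoly m x = fact m * (fps_exp x * UU) $ m"
  unfolding bernpoly_def UU_def using div_mult_swap[OF D_dvd, of "fps_exp x"]
  by (simp add: mult.commute)

lemma bern_diff:
  assumes "m \<ge> 1"
  shows "bernpoly m (x + 1) - bernpoly m x = real m * x ^ (m - 1)"
proof -
  have "fps_exp (x+1) * UU - fps_exp x * UU = fps_exp x * (UU * (fps_exp 1 - 1))"
    by (simp add: fps_exp_add_mult algebra_simps)
  also have "\<dots> = fps_X * fps_exp x" by (simp add: D_U)
  finally have e: "fps_exp (x+1) * UU - fps_exp x * UU = fps_X * fps_exp x" .
  have "bernpoly m (x + 1) - bernpoly m x = fact m * (fps_exp (x+1) * UU - fps_exp x * UU) $ m"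
    by (simp add: bernpoly_U algebra_simps)
  also have "\<dots> = fact m * (x^(m-1) / fact (m-1))" using assms by (simp add: e)
  also have "\<dots> = real m * x ^ (m - 1)"
  proof -
    obtain q where q: "m = Suc q" using assms by (cases m) auto
    show ?thesis by (simp add: q)
  qed
  finally show ?thesis .
qed

lemma bern_mult:
  assumes A: "A > 0" and m: "m \<ge> 1"
  shows "real A ^ (m - 1) * (\<Sum>r<A. bernpoly m (real r / real A)) = bernoulli m"
proof -
  define c where "c = 1 / real A"
  have c0: "c \<noteq> 0" using A by (simp add: c_def)
  define E where "E = (\<Sum>r<A. fps_exp (real r * c))"
  define Dc where "Dc = fps_exp c - (1 :: real fps)"
  have ED: "E * Dc = fps_exp 1 - 1"
  proof -
    have "E * Dc = (\<Sum>r<A. fps_exp (real (Suc r) * c) - fps_exp (real r * c))"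
      unfolding E_def Dc_def sum_distrib_right
      by (rule sum.cong) (auto simp: algebra_simps fps_exp_add_mult[symmetric])
    also have "\<dots> = fps_exp (real A * c) - fps_exp 0"
      by (subst sum_lessThan_telescope) simp
    also have "\<dots> = fps_exp 1 - 1" using A by (simp add: c_def)
    finally show ?thesis .
  qed
  have SD: "fscale c UU * Dc = fps_const c * fps_X"
  proof -
    have "fscale c UU * Dc = fscale c (UU * (fps_exp 1 - 1))"
      by (simp add: fscale_mult fscale_diff fscale_exp fscale_one Dc_def)
    thus ?thesis by (simp add: D_U fscale_X)
  qed
  have Dc0: "Dc \<noteq> 0"
  proof
    assume "Dc = 0"
    hence "Dc $ 1 = 0" by simp
    thus False using c0 by (simp add: Dc_def)
  qed
  have "(E * UU) * Dc = (fps_const (real A) * fscale c UU) * Dc"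
  proof -
    have "(E * UU) * Dc = UU * (fps_exp 1 - 1)" by (simp add: ED[symmetric] algebra_simps)
    also have "\<dots> = fps_X" by (rule D_U)
    also have "\<dots> = fps_const (real A) * (fps_const c * fps_X)"
      using A by (simp add: c_def fps_const_mult[symmetric] del: fps_const_mult)
    also have "\<dots> = (fps_const (real A) * fscale c UU) * Dc" by (simp add: SD mult.assoc)
    finally show ?thesis .
  qed
  hence EU: "E * UU = fps_const (real A) * fscale c UU" using Dc0 by simp
  have "(\<Sum>r<A. bernpoly m (real r / real A)) = fact m * (E * UU) $ m"
    unfolding E_def bernpoly_U sum_distrib_right fps_sum_nth sum_distrib_left
    by (rule sum.cong) (auto simp: c_def)
  also have "\<dots> = fact m * (real A * c ^ m * UU $ m)" by (simp add: EU)
  finally have "real A ^ (m - 1) * (\<Sum>r<A. bernpoly m (real r / real A))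
     = (real A ^ (m - 1) * real A * c ^ m) * (fact m * UU $ m)" by simp
  also have "real A ^ (m - 1) * real A * c ^ m = 1"
  proof -
    have "real A ^ (m - 1) * real A = real A ^ m" using m
      by (metis Suc_diff_le diff_Suc_1 power_Suc2)
    thus ?thesis using A by (simp add: c_def power_one_over)
  qed
  finally show ?thesis by (simp add: bernoulli_def bernpoly_U)
qed


lemma bez_set: "\<exists>c::nat\<Rightarrow>int. int (Gcd (a ` {1..k})) = (\<Sum>i=1..k. c i * int (a i))"
proof (induction k)
  case 0
  then show ?case by simp
next
  case (Suc k)
  then obtain c where c: "int (Gcd (a ` {1..k})) = (\<Sum>i=1..k. c i * int (a i))" by blast
  obtain u v where uv: "u * int (a (Suc k)) + v * int (Gcd (a ` {1..k})) = gcd (int (a (Suc k))) (int (Gcd (a ` {1..k})))"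
    using bezout_int by blast
  have set: "{1..Suc k} = insert (Suc k) {1..k}" by auto
  define c' where "c' = (\<lambda>i. if i = Suc k then u else v * c i)"
  have "int (Gcd (a ` {1..Suc k})) = u * int (a (Suc k)) + v * int (Gcd (a ` {1..k}))"
    unfolding set using uv by simp
  also have "\<dots> = (\<Sum>i=1..Suc k. c' i * int (a i))"
    unfolding set c sum_distrib_left by (simp add: c'_def mult.assoc)
  finally show ?case by blast
qed

lemma repr_nonneg: "representable a k n \<Longrightarrow> n \<ge> 0"
  unfolding representable_def by (auto intro: sum_nonneg)

lemma repr_0: "representable a k 0"
  unfolding representable_def by (rule exI[of _ "\<lambda>_. 0"]) simp

lemma repr_add: "representable a k m \<Longrightarrow> representable a k n \<Longrightarrow> representable a k (m + n)"
  unfolding representable_def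
proof (elim exE)
  fix x y assume "m = (\<Sum>i=1..k. int (a i * x i))" "n = (\<Sum>i=1..k. int (a i * y i))"
  then show "\<exists>z. m + n = (\<Sum>i=1..k. int (a i * z i))"
    by (intro exI[of _ "\<lambda>i. x i + y i"]) (simp add: sum.distrib algebra_simps)
qed

lemma repr_gen: "j \<in> {1..k} \<Longrightarrow> representable a k (int (a j))"
  unfolding representable_def
  by (rule exI[of _ "\<lambda>i. if i = j then 1 else 0"]) (simp add: if_distrib sum.delta cong: if_cong)

lemma repr_mult: "representable a k n \<Longrightarrow> representable a k (int t * n)"
  by (induction t) (auto simp: repr_0 algebra_simps intro: repr_add)

lemma repr_res:
  assumes gcd1: "Gcd (a ` {1..k}) = 1" and j: "j \<in> {1..k}" and A: "a j > 0"
  shows "\<exists>s. representable a k s \<and> s mod int (a j) = 1 mod int (a j)"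
proof -
  obtain c where c: "int (Gcd (a ` {1..k})) = (\<Sum>i=1..k. c i * int (a i))" using bez_set by blast
  define AA where "AA = int (a j)"
  define x where "x = (\<lambda>i. nat (c i mod AA))"
  have AA: "AA > 0" using A by (simp add: AA_def)
  define s where "s = (\<Sum>i=1..k. int (a i * x i))"
  have "s = (\<Sum>i=1..k. int (a i) * (c i mod AA))"
    unfolding s_def x_def using AA by (intro sum.cong) auto
  hence "s mod AA = (\<Sum>i=1..k. int (a i) * (c i mod AA) mod AA) mod AA"
    by (simp add: mod_sum_eq)
  also have "\<dots> = (\<Sum>i=1..k. int (a i) * c i mod AA) mod AA"
    by (simp add: mod_mult_right_eq)
  also have "\<dots> = 1 mod AA" using c gcd1 by (simp add: mod_sum_eq mult.commute)
  finally have "s mod AA = 1 mod AA" .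
  moreover have "representable a k s" unfolding representable_def s_def by blast
  ultimately show ?thesis unfolding AA_def by blast
qed


lemma sum_decomp:
  fixes f :: "int \<Rightarrow> 'b::comm_monoid_add" and A :: nat
  assumes Y: "Y = int ` ((\<lambda>(r,t). r + t*A) ` (SIGMA r:{..<A}. {..<T r}))"
    and inj: "inj_on (\<lambda>(r,t). r + t*A) (SIGMA r:{..<A}. {..<T r})"
  shows "sum f Y = (\<Sum>r<A. \<Sum>t<T r. f (int (r + t*A)))"
proof -
  have "sum f Y = sum (f \<circ> int) ((\<lambda>(r,t). r + t*A) ` (SIGMA r:{..<A}. {..<T r}))"
    unfolding Y by (rule sum.reindex) (simp add: inj_on_def)
  also have "\<dots> = sum (f \<circ> int \<circ> (\<lambda>(r,t). r + t*A)) (SIGMA r:{..<A}. {..<T r})"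
    by (rule sum.reindex[OF inj])
  also have "\<dots> = (\<Sum>r<A. \<Sum>t<T r. f (int (r + t*A)))"
    by (subst sum.Sigma) (auto simp: case_prod_unfold)
  finally show ?thesis .
qed

lemma geom_tel:
  fixes x :: complex
  shows "(x^A - 1) * (\<Sum>t<T. x^(r + t*A)) = x^(r + T*A) - x^r"
  by (induction T) (simp_all add: algebra_simps power_add)

lemma bern_tel:
  assumes m: "m \<ge> 1" and A: "A > 0"
  shows "real m * (\<Sum>t<T. real (r + t*A) ^ (m - 1))
    = real A ^ (m - 1) * (bernpoly m (real (r + T*A) / real A) - bernpoly m (real r / real A))"
proof -
  define f where "f = (\<lambda>t::nat. bernpoly m (real r / real A + real t))"
  have "real m * (\<Sum>t<T. real (r + t*A) ^ (m - 1))
     = real A ^ (m - 1) * (\<Sum>t<T. real m * (real r / real A + real t) ^ (m - 1))"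
    unfolding sum_distrib_left
  proof (rule sum.cong)
    fix t assume "t \<in> {..<T}"
    have "real (r + t*A) = real A * (real r / real A + real t)" using A by (simp add: field_simps)
    thus "real m * real (r + t * A) ^ (m - 1) = real A ^ (m - 1) * (real m * (real r / real A + real t) ^ (m - 1))"
      by (simp add: power_mult_distrib)
  qed simp
  also have "(\<Sum>t<T. real m * (real r / real A + real t) ^ (m - 1)) = (\<Sum>t<T. f (Suc t) - f t)"
  proof (rule sum.cong)
    fix t assume "t \<in> {..<T}"
    have "f (Suc t) = bernpoly m ((real r / real A + real t) + 1)" by (simp add: f_def add.assoc add.commute)
    thus "real m * (real r / real A + real t) ^ (m - 1) = f (Suc t) - f t"
      using bern_diff[OF m, of "real r / real A + real t"] by (simp add: f_def)
  qed simp
  also have "\<dots> = f T - f 0" by (rule sum_lessThan_telescope)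
  also have "f T = bernpoly m (real (r + T*A) / real A)" using A by (simp add: f_def field_simps)
  finally show ?thesis by (simp add: f_def)
qed

theorem mainTheorem2:
  fixes a :: "nat \<Rightarrow> nat" and k :: nat and j :: nat
  assumes pos: "\<forall>i\<in>{1..k}. a i > 0"
    and gcd1: "Gcd (a ` {1..k}) = 1"
    and j: "j \<in> {1..k}"
  defines "NR \<equiv> {n::int. n > 0 \<and> \<not> representable a k n}"
    and "N0 \<equiv> {n::int. n > 0 \<and> representable a k n \<and> \<not> representable a k (n - int (a j))} \<union> {0}"
  shows "finite NR
    \<and> (\<forall>z::complex. z \<noteq> 0 \<and> exp (of_nat (a j) * z) \<noteq> 1 \<longrightarrow>
          (\<Sum>n\<in>NR. exp (of_int n * z))
            = (1 / (exp (of_nat (a j) * z) - 1)) * (\<Sum>n\<in>N0. exp (of_int n * z)) - 1 / (exp z - 1))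
    \<and> (\<forall>m::nat. m \<ge> 1 \<longrightarrow>
          real m * (\<Sum>n\<in>NR. (real_of_int n) ^ (m - 1))
            = real (a j) ^ (m - 1) * (\<Sum>n\<in>N0. bernpoly m (real_of_int n / real (a j))) - bernoulli m)"
proof -
  define A where "A = a j"
  have A: "A > 0" using pos j by (simp add: A_def)
  define Sn where "Sn = (\<lambda>n::nat. representable a k (int n))"
  have Sn0: "Sn 0" by (simp add: Sn_def repr_0)
  have SnA: "Sn (n + t * A)" if "Sn n" for n t
  proof -
    have "representable a k (int t * int A)"
      by (rule repr_mult) (simp add: A_def repr_gen[OF j])
    hence "representable a k (int n + int t * int A)" using that by (simp add: Sn_def repr_add)
    thus ?thesis by (simp add: Sn_def)
  qed
  have ex: "\<exists>n. Sn n \<and> n mod A = r" if r: "r < A" for r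
  proof -
    obtain s where s: "representable a k s" "s mod int A = 1 mod int A"
      using repr_res[OF gcd1 j] A unfolding A_def by blast
    have s0: "s \<ge> 0" using repr_nonneg[OF s(1)] .
    define n where "n = nat (int r * s)"
    have "int n = int r * s" using s0 by (simp add: n_def)
    moreover have "representable a k (int r * s)" by (rule repr_mult[OF s(1)])
    ultimately have "Sn n" by (simp add: Sn_def)
    moreover have "int (n mod A) = int r"
    proof -
      have "int (n mod A) = (int r * s) mod int A" using \<open>int n = int r * s\<close> by (simp add: of_nat_mod)
      also have "\<dots> = (int r * (s mod int A)) mod int A" by (simp add: mod_mult_right_eq)
      also have "\<dots> = int r mod int A" using s(2) by (simp add: mod_mult_right_eq)
      also have "\<dots> = int r" using r by simp
      finally show ?thesis .
    qed
    ultimately show ?thesis by (intro exI[of _ n]) simp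
  qed
  define w where "w = (\<lambda>r. LEAST n. Sn n \<and> n mod A = r)"
  have w: "Sn (w r) \<and> w r mod A = r" if "r < A" for r
    unfolding w_def by (rule LeastI_ex[OF ex[OF that]])
  have wle: "w (n mod A) \<le> n" if "Sn n" for n
    unfolding w_def by (rule Least_le) (simp add: that)
  have Sn_iff: "Sn n \<longleftrightarrow> w (n mod A) \<le> n" for n
  proof
    assume le: "w (n mod A) \<le> n"
    define r where "r = n mod A"
    have r: "r < A" using A by (simp add: r_def)
    have "w r mod A = n mod A" using w[OF r] by (simp add: r_def)
    hence "A dvd n - w r" using le r_def mod_eq_dvd_iff_nat[of "w r" n A] by simp
    then obtain t where t: "n - w r = A * t" by blast
    have "n = w r + t * A" using t le r_def by (simp add: mult.commute)
    thus "Sn n" using SnA w[OF r] by metis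
  qed (rule wle)
  define T where "T = (\<lambda>r. w r div A)"
  have wT: "w r = r + T r * A" if "r < A" for r
    using w[OF that] div_mult_mod_eq[of "w r" A] by (simp add: T_def)
  define Sig where "Sig = (SIGMA r:{..<A}. {..<T r})"
  define g where "g = (\<lambda>(r::nat,t::nat). r + t*A)"
  have inj: "inj_on g Sig"
  proof (rule inj_onI)
    fix p q assume p: "p \<in> Sig" and q: "q \<in> Sig" and e: "g p = g q"
    obtain r t where pr: "p = (r,t)" by (cases p)
    obtain r' t' where qr: "q = (r',t')" by (cases q)
    have rr: "r < A" "r' < A" using p q pr qr by (auto simp: Sig_def)
    have e': "r + t*A = r' + t'*A" using e pr qr by (simp add: g_def)
    hence "(r + t*A) mod A = (r' + t'*A) mod A" by simp
    hence "r = r'" using rr by simp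
    with e' A have "t = t'" by simp
    thus "p = q" using pr qr \<open>r = r'\<close> by simp
  qed
  have NRn: "{n. \<not> Sn n} = g ` Sig"
  proof safe
    fix n assume "\<not> Sn n"
    hence lt: "n < w (n mod A)" using Sn_iff by force
    have r: "n mod A < A" using A by simp
    have n: "n = n mod A + (n div A) * A" by simp
    have "n div A < T (n mod A)"
    proof (rule ccontr)
      assume "\<not> n div A < T (n mod A)"
      hence "T (n mod A) * A \<le> (n div A) * A" by simp
      hence "w (n mod A) \<le> n" using wT[OF r] n by linarith
      thus False using lt by simp
    qed
    thus "n \<in> g ` Sig" using r unfolding Sig_def g_def
      by (intro image_eqI[of _ _ "(n mod A, n div A)"]) auto
  next
    fix r t assume "(r, t) \<in> Sig" "Sn (g (r, t))"
    hence r: "r < A" and t: "t < T r" by (auto simp: Sig_def)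
    have m: "(r + t*A) mod A = r" using r by simp
    have "w r \<le> r + t*A" using Sn_iff[of "r + t*A"] \<open>Sn (g (r,t))\<close> m by (simp add: g_def)
    hence "T r * A \<le> t * A" using wT[OF r] by simp
    thus False using t A by simp
  qed
  have NR_eq: "NR = int ` {n. \<not> Sn n}"
  proof safe
    fix n assume "n \<in> NR"
    hence n: "n > 0" "\<not> representable a k n" by (auto simp: NR_def)
    hence "\<not> Sn (nat n)" by (simp add: Sn_def)
    thus "n \<in> int ` {n. \<not> Sn n}" using n by (intro image_eqI[of _ _ "nat n"]) auto
  next
    fix n assume "\<not> Sn n"
    hence "n \<noteq> 0" using Sn0 by (cases n) auto
    thus "int n \<in> NR" using \<open>\<not> Sn n\<close> by (simp add: NR_def Sn_def)
  qed
  have NRdec: "NR = int ` (g ` Sig)" using NR_eq NRn by simp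
  have injg': "inj_on (\<lambda>(r,t). r + t*A) (SIGMA r:{..<A}. {..<T r})"
    using inj unfolding g_def Sig_def .
  have NRdec': "NR = int ` ((\<lambda>(r,t). r + t*A) ` (SIGMA r:{..<A}. {..<T r}))"
    using NRdec unfolding g_def Sig_def .
  have finNR: "finite NR" unfolding NRdec Sig_def by auto
  have w0: "w 0 = 0" using wle[OF Sn0] by simp
  have N0_eq: "N0 = int ` (w ` {..<A})"
  proof (intro equalityI subsetI)
    fix n assume "n \<in> N0"
    show "n \<in> int ` w ` {..<A}"
    proof (cases "n = 0")
      case True
      thus ?thesis using A w0 by (intro image_eqI[of _ _ "w 0"]) auto
    next
      case False
      with \<open>n \<in> N0\<close> have n: "n > 0" "representable a k n" "\<not> representable a k (n - int A)"
        by (auto simp: N0_def A_def)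
      define m where "m = nat n"
      have mS: "Sn m" using n by (simp add: Sn_def m_def)
      define r where "r = m mod A"
      have r: "r < A" using A by (simp add: r_def)
      have "w r = m"
      proof (rule ccontr)
        assume "w r \<noteq> m"
        hence lt: "w r < m" using wle[OF mS] r_def by simp
        have "w r mod A = m mod A" using w[OF r] by (simp add: r_def)
        hence "A dvd m - w r" using lt mod_eq_dvd_iff_nat[of "w r" m A] by simp
        moreover have "m - w r > 0" using lt by simp
        ultimately have "m - w r \<ge> A" by (simp add: dvd_imp_le)
        hence ge: "w r \<le> m - A" "A \<le> m" using lt by auto
        have "(m - A) mod A = r" using ge(2) by (simp add: r_def le_mod_geq)
        hence "Sn (m - A)" using Sn_iff ge by simp
        moreover have "int (m - A) = n - int A" using ge(2) n by (simp add: m_def of_nat_diff)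
        ultimately show False using n(3) by (simp add: Sn_def)
      qed
      thus ?thesis using r n by (intro image_eqI[of n int "w r"] imageI) (auto simp: m_def)
    qed
  next
    fix x assume "x \<in> int ` w ` {..<A}"
    then obtain r where r': "r < A" and xr: "x = int (w r)" by auto
    show "x \<in> N0"
    proof (cases "w r = 0")
      case True thus ?thesis by (simp add: N0_def xr)
    next
      case False
      have nr: "\<not> representable a k (int (w r) - int A)"
      proof
        assume R: "representable a k (int (w r) - int A)"
        hence ge: "A \<le> w r" using repr_nonneg[OF R] by simp
        hence "Sn (w r - A)" using R by (simp add: Sn_def of_nat_diff)
        hence "w ((w r - A) mod A) \<le> w r - A" by (rule wle)
        moreover have "(w r - A) mod A = r" using ge w[OF r'] by (simp add: le_mod_geq)
        ultimately show False using A False by simp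
      qed
      thus ?thesis using False w[OF r'] xr by (simp add: N0_def A_def Sn_def)
    qed
  qed
  have injw: "inj_on w {..<A}"
    by (rule inj_onI) (metis lessThan_iff w)
  have sN0: "sum f N0 = (\<Sum>r<A. f (int (w r)))" for f :: "int \<Rightarrow> complex"
    unfolding N0_eq by (subst sum.reindex) (auto simp: inj_on_def sum.reindex[OF injw])
  have sN0': "sum f N0 = (\<Sum>r<A. f (int (w r)))" for f :: "int \<Rightarrow> real"
    unfolding N0_eq by (subst sum.reindex) (auto simp: inj_on_def sum.reindex[OF injw])
  have P1: "(\<Sum>n\<in>NR. exp (of_int n * z))
            = (1 / (exp (of_nat (a j) * z) - 1)) * (\<Sum>n\<in>N0. exp (of_int n * z)) - 1 / (exp z - 1)"
    if z: "exp (of_nat (a j) * z) \<noteq> 1" for z :: complex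
  proof -
    define x where "x = exp z"
    have ex: "exp (of_int (int n) * z) = x ^ n" for n
      by (simp add: x_def exp_of_nat_mult)
    have xA: "x ^ A \<noteq> 1" using z by (simp add: x_def A_def exp_of_nat_mult)
    have x1: "x \<noteq> 1" using xA by auto
    have "(x^A - 1) * (\<Sum>n\<in>NR. exp (of_int n * z)) = (\<Sum>r<A. (x^A - 1) * (\<Sum>t<T r. x^(r + t*A)))"
      by (simp only: sum_decomp[OF NRdec' injg'] ex sum_distrib_left)
    also have "\<dots> = (\<Sum>r<A. x^(w r) - x^r)"
      by (rule sum.cong) (simp_all add: geom_tel wT)
    also have "\<dots> = (\<Sum>n\<in>N0. exp (of_int n * z)) - (\<Sum>r<A. x^r)"
      by (simp add: sN0 x_def exp_of_nat_mult sum_subtractf)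
    also have "(\<Sum>r<A. x^r) = (1 - x^A) / (1 - x)" using x1 by (simp add: sum_gp_strict)
    finally have eq: "(x^A - 1) * (\<Sum>n\<in>NR. exp (of_int n * z)) = (\<Sum>n\<in>N0. exp (of_int n * z)) - (1 - x^A) / (1 - x)" .
    have xA': "x^A - 1 \<noteq> 0" using xA by simp
    have x1': "x - 1 \<noteq> 0" "1 - x \<noteq> 0" using x1 by auto
    have "(\<Sum>n\<in>NR. exp (of_int n * z)) = ((\<Sum>n\<in>N0. exp (of_int n * z)) - (1 - x^A) / (1 - x)) / (x^A - 1)"
      using eq xA' by (simp add: field_simps)
    also have "\<dots> = (1 / (x^A - 1)) * (\<Sum>n\<in>N0. exp (of_int n * z)) - ((1 - x^A) / (1 - x)) / (x^A - 1)"
      by (simp add: diff_divide_distrib)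
    also have "((1 - x^A) / (1 - x)) / (x^A - 1) = 1 / (x - 1)"
    proof -
      have "(1 - x^A) / (x^A - 1) = -1" using xA' by (simp add: divide_eq_eq)
      have "((1 - x^A) / (1 - x)) / (x^A - 1) = ((1 - x^A) / (x^A - 1)) / (1 - x)"
        by (simp only: divide_divide_eq_left mult.commute)
      hence "((1 - x^A) / (1 - x)) / (x^A - 1) = -1 / (1 - x)" using \<open>(1 - x^A) / (x^A - 1) = -1\<close> by simp
      also have "\<dots> = 1 / (x - 1)" using x1' by (simp add: field_simps)
      finally show ?thesis .
    qed
    finally show ?thesis by (simp add: x_def A_def exp_of_nat_mult)
  qed
  have P2: "real m * (\<Sum>n\<in>NR. (real_of_int n) ^ (m - 1))
            = real (a j) ^ (m - 1) * (\<Sum>n\<in>N0. bernpoly m (real_of_int n / real (a j))) - bernoulli m"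
    if m: "m \<ge> 1" for m
  proof -
    have "real m * (\<Sum>n\<in>NR. (real_of_int n) ^ (m - 1))
        = (\<Sum>r<A. real m * (\<Sum>t<T r. real (r + t*A) ^ (m - 1)))"
      by (simp add: sum_decomp[OF NRdec' injg'] sum_distrib_left)
    also have "\<dots> = (\<Sum>r<A. real A ^ (m - 1) * (bernpoly m (real (w r) / real A) - bernpoly m (real r / real A)))"
      by (rule sum.cong) (simp_all only: lessThan_iff bern_tel[OF m A] wT)
    also have "\<dots> = real A ^ (m - 1) * (\<Sum>r<A. bernpoly m (real (w r) / real A))
                    - real A ^ (m - 1) * (\<Sum>r<A. bernpoly m (real r / real A))"
      by (simp add: sum_subtractf sum_distrib_left algebra_simps)
    also have "real A ^ (m - 1) * (\<Sum>r<A. bernpoly m (real r / real A)) = bernoulli m"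
      by (rule bern_mult[OF A m])
    also have "(\<Sum>r<A. bernpoly m (real (w r) / real A)) = (\<Sum>n\<in>N0. bernpoly m (real_of_int n / real A))"
      by (simp add: sN0')
    finally show ?thesis by (simp add: A_def)
  qed
  show ?thesis using finNR P1 P2 by blast
qed

end
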